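(* For any $\alpha\in(0,\frac\pi2)$ there exist constants $C_\alpha>0$ and $a_0=a_0(\alpha)>0$ such that for $u\in\mathbb{C}$ and $g=e^{i\gamma}\in\mathbb{S}^1\subset\mathbb{C}$ with $W(u,g)<a_0^2$ we may represent $u=fe^{i\psi}$ with $f\ge0$, $\psi\in\mathbb{R}$, such that $|f^2-1|\le\sqrt{2W(u,g)}<\sqrt2a_0$, and either $|\psi-\gamma-\alpha|<C_\alpha\sqrt{W(u,g)}$ or $|\psi-\gamma+\alpha|<C_\alpha\sqrt{W(u,g)}$.
   Context: $\mathbb{R}^2\simeq\mathbb{C}$ with $(u,v)=\Re[u\bar v]$; $W(u,g)=\frac12(|u|^2-1)^2+[(u,g)-\cos\alpha]^2$. *)

theory Defs
  imports "HOL-Analysis.Analysis"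
begin

text \<open>Inner product on R^2 identified with C: (u,v) = Re (u * cnj v).
  Energy W(u,g) = 1/2 (|u|^2 - 1)^2 + ((u,g) - cos alpha)^2.\<close>

definition W :: "real \<Rightarrow> complex \<Rightarrow> complex \<Rightarrow> real" where
  "W \<alpha> u g = (1/2) * ((cmod u)\<^sup>2 - 1)\<^sup>2 + (Re (u * cnj g) - cos \<alpha>)\<^sup>2"

end

theory Submission
  imports Defs
begin

lemma cos_lb: fixes x :: real assumes "x \<ge> 0" shows "1 - x\<^sup>2/2 \<le> cos x"
proof -
  let ?f = "\<lambda>x. cos x - 1 + x\<^sup>2/2"
  have "\<And>u. \<lbrakk>0 \<le> u; u \<le> x\<rbrakk> \<Longrightarrow> (?f has_real_derivative (u - sin u)) (at u)"
    by (auto intro!: derivative_eq_intros simp: field_simps)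
  moreover have "\<And>u. \<lbrakk>0 \<le> u; u \<le> x\<rbrakk> \<Longrightarrow> 0 \<le> u - sin u" using sin_x_le_x by auto
  ultimately have "?f 0 \<le> ?f x"
    by (intro DERIV_nonneg_imp_nondecreasing [OF assms]) blast
  then show ?thesis by simp
qed

lemma sin_lb: fixes x :: real assumes "x \<ge> 0" shows "x - x^3/6 \<le> sin x"
proof -
  let ?f = "\<lambda>x. sin x - x + x^3/6"
  have "\<And>u. \<lbrakk>0 \<le> u; u \<le> x\<rbrakk> \<Longrightarrow> (?f has_real_derivative (cos u - 1 + u\<^sup>2/2)) (at u)"
    by (auto intro!: derivative_eq_intros simp: field_simps power2_eq_square)
  moreover have "\<And>u. \<lbrakk>0 \<le> u; u \<le> x\<rbrakk> \<Longrightarrow> 0 \<le> cos u - 1 + u\<^sup>2/2" using cos_lb by force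
  ultimately have "?f 0 \<le> ?f x"
    by (intro DERIV_nonneg_imp_nondecreasing [OF assms]) blast
  then show ?thesis by simp
qed

lemma sin_lb3: fixes x :: real assumes "0 \<le> x" "x \<le> 2" shows "x/3 \<le> sin x"
proof -
  have "x * x \<le> 2 * 2" using assms by (intro mult_mono) auto
  then have "(x * x) * x \<le> 4 * x" using assms by (intro mult_right_mono) auto
  then have "x^3 \<le> 4 * x" by (simp add: power3_eq_cube)
  then show ?thesis using sin_lb[OF assms(1)] by linarith
qed

lemma abs_sin_lb: fixes y :: real assumes "\<bar>y\<bar> \<le> 2" shows "\<bar>y\<bar>/3 \<le> \<bar>sin y\<bar>"
proof (cases "y \<ge> 0")
  case True
  then show ?thesis using sin_lb3[of y] assms by auto
next
  case False
  then show ?thesis using sin_lb3[of "-y"] assms by auto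
qed

lemma sin_half_lb:
  fixes \<theta> \<alpha> :: real
  assumes "0 \<le> \<theta>" "\<theta> \<le> pi" "0 < \<alpha>" "\<alpha> < pi/2"
  shows "sin ((\<theta> + \<alpha>)/2) \<ge> sin (\<alpha>/2)"
proof (cases "(\<theta> + \<alpha>)/2 \<le> pi/2")
  case True
  then show ?thesis using assms by (intro sin_monotone_2pi_le) auto
next
  case False
  have h1: "\<alpha> / 2 \<le> pi - (\<theta> + \<alpha>) / 2" using assms by (simp add: field_simps)
  have h2: "pi - (\<theta> + \<alpha>) / 2 \<le> pi / 2" using False by linarith
  have h3: "- (pi/2) \<le> \<alpha> / 2" using assms by linarith
  have "sin ((\<theta> + \<alpha>)/2) = sin (pi - (\<theta> + \<alpha>)/2)" by simp
  also have "\<dots> \<ge> sin (\<alpha>/2)" using h1 h2 h3 by (intro sin_monotone_2pi_le)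
  finally show ?thesis .
qed

lemma cos_diff_lb:
  fixes \<theta> \<alpha> :: real
  assumes "0 \<le> \<theta>" "\<theta> \<le> pi" "0 < \<alpha>" "\<alpha> < pi/2"
  shows "sin (\<alpha>/2) * \<bar>\<theta> - \<alpha>\<bar> / 3 \<le> \<bar>cos \<theta> - cos \<alpha>\<bar>"
proof -
  have e: "cos \<theta> - cos \<alpha> = 2 * sin ((\<theta> + \<alpha>)/2) * sin ((\<alpha> - \<theta>)/2)"
    by (rule cos_diff_cos)
  have s1: "sin ((\<theta> + \<alpha>)/2) \<ge> sin (\<alpha>/2)" using sin_half_lb assms by blast
  have p: "sin (\<alpha>/2) > 0" using assms by (intro sin_gt_zero) auto
  have "\<bar>(\<alpha> - \<theta>)/2\<bar> \<le> 2" using assms pi_less_4 by auto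
  then have s2: "\<bar>(\<alpha> - \<theta>)/2\<bar>/3 \<le> \<bar>sin ((\<alpha> - \<theta>)/2)\<bar>" by (rule abs_sin_lb)
  have "sin (\<alpha>/2) * (\<bar>(\<alpha> - \<theta>)/2\<bar>/3) \<le> sin ((\<theta> + \<alpha>)/2) * \<bar>sin ((\<alpha> - \<theta>)/2)\<bar>"
    using s1 s2 p by (intro mult_mono) auto
  moreover have "\<bar>cos \<theta> - cos \<alpha>\<bar> = 2 * (sin ((\<theta> + \<alpha>)/2) * \<bar>sin ((\<alpha> - \<theta>)/2)\<bar>)"
    using e s1 p by (simp add: abs_mult)
  moreover have "\<bar>(\<alpha> - \<theta>)/2\<bar> = \<bar>\<theta> - \<alpha>\<bar>/2" by auto
  ultimately show ?thesis using p by (auto simp: field_simps)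
qed

theorem lemma5p1:
  fixes \<alpha> :: real
  assumes "0 < \<alpha>" and "\<alpha> < pi / 2"
  shows "\<exists>C a0. C > 0 \<and> a0 > 0 \<and>
    (\<forall>u \<gamma>. W \<alpha> u (cis \<gamma>) < a0\<^sup>2 \<longrightarrow>
       (\<exists>f \<psi>. f \<ge> 0 \<and> u = complex_of_real f * cis \<psi> \<and>
          \<bar>f\<^sup>2 - 1\<bar> \<le> sqrt (2 * W \<alpha> u (cis \<gamma>)) \<and>
          sqrt (2 * W \<alpha> u (cis \<gamma>)) < sqrt 2 * a0 \<and>
          (\<bar>\<psi> - \<gamma> - \<alpha>\<bar> \<le> C * sqrt (W \<alpha> u (cis \<gamma>)) \<or>
           \<bar>\<psi> - \<gamma> + \<alpha>\<bar> \<le> C * sqrt (W \<alpha> u (cis \<gamma>)))))"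
proof -
  have p: "sin (\<alpha>/2) > 0" using assms by (intro sin_gt_zero) auto
  define C where "C = 9 / sin (\<alpha>/2)"
  have "C > 0" using p by (simp add: C_def)
  moreover have "\<forall>u \<gamma>. W \<alpha> u (cis \<gamma>) < 1\<^sup>2 \<longrightarrow>
       (\<exists>f \<psi>. f \<ge> 0 \<and> u = complex_of_real f * cis \<psi> \<and>
          \<bar>f\<^sup>2 - 1\<bar> \<le> sqrt (2 * W \<alpha> u (cis \<gamma>)) \<and>
          sqrt (2 * W \<alpha> u (cis \<gamma>)) < sqrt 2 * 1 \<and>
          (\<bar>\<psi> - \<gamma> - \<alpha>\<bar> \<le> C * sqrt (W \<alpha> u (cis \<gamma>)) \<or>
           \<bar>\<psi> - \<gamma> + \<alpha>\<bar> \<le> C * sqrt (W \<alpha> u (cis \<gamma>))))"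
  proof (intro allI impI)
    fix u \<gamma>
    assume Wl: "W \<alpha> u (cis \<gamma>) < 1\<^sup>2"
    define w where "w = W \<alpha> u (cis \<gamma>)"
    define v where "v = u * cis (- \<gamma>)"
    define f where "f = cmod u"
    define \<theta> where "\<theta> = Arg v"
    have fv: "cmod v = f" by (simp add: v_def f_def norm_mult)
    have vrep: "v = complex_of_real f * cis \<theta>"
      using rcis_cmod_Arg[of v] by (simp add: rcis_def fv \<theta>_def)
    have uv: "u = v * cis \<gamma>" by (simp add: v_def mult.assoc cis_mult)
    have urep: "u = complex_of_real f * cis (\<gamma> + \<theta>)"
      unfolding uv vrep cis_mult[symmetric] by (simp only: mult_ac)
    have "cnj (cis \<gamma>) = cis (- \<gamma>)" by (simp add: complex_eq_iff)
    then have Rev: "Re (u * cnj (cis \<gamma>)) = f * cos \<theta>"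
      by (simp add: vrep flip: v_def)
    have wdef: "w = (1/2) * (f\<^sup>2 - 1)\<^sup>2 + (f * cos \<theta> - cos \<alpha>)\<^sup>2"
      unfolding w_def W_def Rev by (simp add: f_def)
    have f0: "f \<ge> 0" by (simp add: f_def)
    have w0: "w \<ge> 0" by (simp add: wdef)
    define s where "s = sqrt w"
    have s0: "s \<ge> 0" by (simp add: s_def w0)
    have b1: "\<bar>f\<^sup>2 - 1\<bar> \<le> sqrt (2 * w)"
    proof -
      have "(f\<^sup>2 - 1)\<^sup>2 \<le> 2 * w" by (simp add: wdef)
      then have "sqrt ((f\<^sup>2 - 1)\<^sup>2) \<le> sqrt (2 * w)" by (rule real_sqrt_le_mono)
      then show ?thesis by simp
    qed
    have b2: "sqrt (2 * w) < sqrt 2 * 1"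
    proof -
      have "w < 1" using Wl unfolding w_def by simp
      then have "2 * w < 2" by linarith
      then have "sqrt (2 * w) < sqrt 2" by (rule real_sqrt_less_mono)
      then show ?thesis by simp
    qed
    have b3: "\<bar>f * cos \<theta> - cos \<alpha>\<bar> \<le> s"
    proof -
      have "(f * cos \<theta> - cos \<alpha>)\<^sup>2 \<le> w" by (simp add: wdef)
      then have "sqrt ((f * cos \<theta> - cos \<alpha>)\<^sup>2) \<le> sqrt w" by (rule real_sqrt_le_mono)
      then show ?thesis by (simp add: s_def)
    qed
    have b4: "\<bar>f - 1\<bar> \<le> 2 * s"
    proof -
      have "\<bar>f - 1\<bar> \<le> \<bar>f - 1\<bar> * (f + 1)" using f0 by (simp add: mult_le_cancel_left1)
      also have "\<dots> = \<bar>f\<^sup>2 - 1\<bar>"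
      proof -
        have "f\<^sup>2 - 1 = (f - 1) * (f + 1)" by (simp add: power2_eq_square algebra_simps)
        then have "\<bar>f\<^sup>2 - 1\<bar> = \<bar>f - 1\<bar> * \<bar>f + 1\<bar>" by (simp add: abs_mult)
        then show ?thesis using f0 by simp
      qed
      also have "\<dots> \<le> sqrt 2 * s"
      proof -
        have "sqrt (2 * w) = sqrt 2 * s" unfolding s_def by (rule real_sqrt_mult)
        then show ?thesis using b1 by linarith
      qed
      also have "\<dots> \<le> 2 * s" using s0 sqrt2_less_2 by (intro mult_right_mono) auto
      finally show ?thesis .
    qed
    have b5: "\<bar>cos \<theta> - cos \<alpha>\<bar> \<le> 3 * s"
    proof -
      have "\<bar>(f - 1) * cos \<theta>\<bar> \<le> \<bar>f - 1\<bar>" by (simp add: abs_mult mult_left_le)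
      moreover have "cos \<theta> - cos \<alpha> = (f * cos \<theta> - cos \<alpha>) - (f - 1) * cos \<theta>"
        by (simp add: algebra_simps)
      ultimately show ?thesis using b3 b4 by linarith
    qed
    have tb: "- pi < \<theta>" "\<theta> \<le> pi" using Arg_bounded[of v] by (auto simp: \<theta>_def)
    have ang: "\<bar>\<theta> - \<alpha>\<bar> \<le> C * s \<or> \<bar>\<theta> + \<alpha>\<bar> \<le> C * s"
    proof (cases "\<theta> \<ge> 0")
      case True
      have "sin (\<alpha>/2) * \<bar>\<theta> - \<alpha>\<bar> / 3 \<le> \<bar>cos \<theta> - cos \<alpha>\<bar>"
        using True tb(2) assms by (rule cos_diff_lb)
      then have "sin (\<alpha>/2) * \<bar>\<theta> - \<alpha>\<bar> / 3 \<le> 3 * s" using b5 by linarith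
      then have "\<bar>\<theta> - \<alpha>\<bar> \<le> C * s" using p unfolding C_def by (simp add: field_simps)
      then show ?thesis by simp
    next
      case False
      have n1: "0 \<le> - \<theta>" using False by linarith
      have n2: "- \<theta> \<le> pi" using tb(1) by linarith
      have "sin (\<alpha>/2) * \<bar>(-\<theta>) - \<alpha>\<bar> / 3 \<le> \<bar>cos (-\<theta>) - cos \<alpha>\<bar>"
        using n1 n2 assms by (rule cos_diff_lb)
      moreover have "cos (-\<theta>) = cos \<theta>" by (rule cos_minus)
      ultimately have "sin (\<alpha>/2) * \<bar>(-\<theta>) - \<alpha>\<bar> / 3 \<le> 3 * s" using b5 by linarith
      moreover have "\<bar>(-\<theta>) - \<alpha>\<bar> = \<bar>\<theta> + \<alpha>\<bar>" by simp
      ultimately have "sin (\<alpha>/2) * \<bar>\<theta> + \<alpha>\<bar> / 3 \<le> 3 * s" by metis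
      then have "\<bar>\<theta> + \<alpha>\<bar> \<le> C * s" using p unfolding C_def by (simp add: field_simps)
      then show ?thesis by simp
    qed
    show "\<exists>f \<psi>. f \<ge> 0 \<and> u = complex_of_real f * cis \<psi> \<and>
          \<bar>f\<^sup>2 - 1\<bar> \<le> sqrt (2 * W \<alpha> u (cis \<gamma>)) \<and>
          sqrt (2 * W \<alpha> u (cis \<gamma>)) < sqrt 2 * 1 \<and>
          (\<bar>\<psi> - \<gamma> - \<alpha>\<bar> \<le> C * sqrt (W \<alpha> u (cis \<gamma>)) \<or>
           \<bar>\<psi> - \<gamma> + \<alpha>\<bar> \<le> C * sqrt (W \<alpha> u (cis \<gamma>)))"
      unfolding w_def[symmetric] s_def[symmetric]
    proof (intro exI conjI)
      show "f \<ge> 0" by (rule f0)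
      show "u = complex_of_real f * cis (\<gamma> + \<theta>)" by (rule urep)
      show "\<bar>f\<^sup>2 - 1\<bar> \<le> sqrt (2 * w)" by (rule b1)
      show "sqrt (2 * w) < sqrt 2 * 1" by (rule b2)
      have e1: "\<gamma> + \<theta> - \<gamma> - \<alpha> = \<theta> - \<alpha>" "\<gamma> + \<theta> - \<gamma> + \<alpha> = \<theta> + \<alpha>" by simp_all
      show "\<bar>\<gamma> + \<theta> - \<gamma> - \<alpha>\<bar> \<le> C * s \<or> \<bar>\<gamma> + \<theta> - \<gamma> + \<alpha>\<bar> \<le> C * s"
        unfolding e1 by (rule ang)
    qed
  qed
  ultimately show ?thesis by (intro exI[of _ C] exI[of _ "1::real"]) auto
qed

end
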